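(* For fixed $d>3$ there is a constant $c>0$, independent of $n$ and $s$, such that for every $s\in(0,1]$ and every initial position $x(0)$ with $\sum_i d\,(x_i(0)-\mu)^2\le 1$ (where $\mu=\frac1n\sum_ix_i(0)$), the random averaging system satisfies $\mathbb{E}\,E_s\le c/s$.
   Context: Fix an integer $d>3$ and $n>d$. In a random averaging system, for each $t\ge0$ the graph $G_t$ is chosen independently and uniformly at random among all simple $(d-1)$-regular graphs on $[n]$, and then a self-loop is added at every vertex. Let $M_t$ be the resulting $0/1$ adjacency matrix (all row sums equal to $d$). Set $P_t=M_t/d$ and $x(t+1)=P_tx(t)$. At time $t$, each edge $\{i,j\}$ of $G_t$ with $i\ne j$ is embedded as the closed interval with endpoints $x_i(t),x_j(t)$. The union of these intervals is a disjoint union of closed intervals (blocks) with lengths $l_1(t),\dots,l_{k_t}(t)$. The $s$-energy is $E_s=\sum_{t\ge0}\sum_il_i(t)^s$; it is a random variable. *)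

theory Defs
  imports "HOL-Analysis.Analysis" "HOL-Probability.Probability"
begin

definition simple_edges :: "nat \<Rightarrow> nat set set" where
  "simple_edges n = {e. \<exists>i j. i < n \<and> j < n \<and> i \<noteq> j \<and> e = {i, j}}"

definition regular_graphs :: "nat \<Rightarrow> nat \<Rightarrow> nat set set set" where
  "regular_graphs n k = {G. G \<subseteq> simple_edges n \<and> (\<forall>i<n. card {e\<in>G. i \<in> e} = k)}"

text \<open>One step x(t+1) = P_t x(t) with P_t = M_t/d, M_t = adjacency matrix of G_t plus
  a self-loop at each vertex.\<close>
definition avg_step :: "nat \<Rightarrow> nat \<Rightarrow> nat set set \<Rightarrow> (nat \<Rightarrow> real) \<Rightarrow> (nat \<Rightarrow> real)" where
  "avg_step d n G y = (\<lambda>i. (y i + (\<Sum>j\<in>{j. j < n \<and> {i, j} \<in> G}. y j)) / real d)"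

fun traj :: "nat \<Rightarrow> nat \<Rightarrow> (nat \<Rightarrow> real) \<Rightarrow> nat set set stream \<Rightarrow> nat \<Rightarrow> (nat \<Rightarrow> real)" where
  "traj d n x0 \<omega> 0 = x0"
| "traj d n x0 \<omega> (Suc t) = avg_step d n (\<omega> !! t) (traj d n x0 \<omega> t)"

definition edge_union :: "nat set set \<Rightarrow> (nat \<Rightarrow> real) \<Rightarrow> real set" where
  "edge_union G y = \<Union> {{min (y i) (y j) .. max (y i) (y j)} | i j. {i, j} \<in> G \<and> i \<noteq> j}"

definition block_sum :: "real \<Rightarrow> nat set set \<Rightarrow> (nat \<Rightarrow> real) \<Rightarrow> real" where
  "block_sum s G y = (\<Sum>C\<in>components (edge_union G y). (Sup C - Inf C) powr s)"

definition s_energy :: "nat \<Rightarrow> nat \<Rightarrow> real \<Rightarrow> (nat \<Rightarrow> real) \<Rightarrow> nat set set stream \<Rightarrow> ennreal" where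
  "s_energy d n s x0 \<omega> = (\<Sum>t. ennreal (block_sum s (\<omega> !! t) (traj d n x0 \<omega> t)))"

definition graph_seq_measure :: "nat \<Rightarrow> nat \<Rightarrow> nat set set stream measure" where
  "graph_seq_measure d n = stream_space (measure_pmf (pmf_of_set (regular_graphs n (d - 1))))"

end

theory Submission
  imports Defs
begin

definition nbr :: "nat set set \<Rightarrow> nat \<Rightarrow> nat \<Rightarrow> nat set" where
  "nbr G n i = {j. j < n \<and> {i, j} \<in> G}"

lemma regD_edge:
  assumes "G \<in> regular_graphs n k" "e \<in> G"
  shows "\<exists>i j. i < n \<and> j < n \<and> i \<noteq> j \<and> e = {i, j}"
  using assms unfolding regular_graphs_def simple_edges_def by auto

lemma regD_deg:
  assumes "G \<in> regular_graphs n k" "i < n"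
  shows "card {e\<in>G. i \<in> e} = k"
  using assms unfolding regular_graphs_def by auto

lemma finite_simple_edges: "finite (simple_edges n)"
proof -
  have "simple_edges n \<subseteq> Pow {..<n}" unfolding simple_edges_def by auto
  then show ?thesis by (rule finite_subset) auto
qed

lemma finite_regular_graphs: "finite (regular_graphs n k)"
proof -
  have "regular_graphs n k \<subseteq> Pow (simple_edges n)" unfolding regular_graphs_def by auto
  then show ?thesis by (rule finite_subset) (auto simp: finite_simple_edges)
qed

lemma reg_finite_G: "G \<in> regular_graphs n k \<Longrightarrow> finite G"
  unfolding regular_graphs_def using finite_simple_edges finite_subset by blast

lemma nbr_not_self: "G \<in> regular_graphs n k \<Longrightarrow> i \<notin> nbr G n i"
  unfolding nbr_def regular_graphs_def simple_edges_def
  by (auto simp: doubleton_eq_iff)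

lemma card_nbr:
  assumes "G \<in> regular_graphs n k" "i < n"
  shows "card (nbr G n i) = k"
proof -
  have "bij_betw (\<lambda>j. {i, j}) (nbr G n i) {e\<in>G. i \<in> e}"
  proof (rule bij_betwI')
    show "\<And>x y. x \<in> nbr G n i \<Longrightarrow> y \<in> nbr G n i \<Longrightarrow> ({i, x} = {i, y}) = (x = y)"
      using nbr_not_self[OF assms(1)] by (auto simp: doubleton_eq_iff)
    show "\<And>x. x \<in> nbr G n i \<Longrightarrow> {i, x} \<in> {e \<in> G. i \<in> e}" by (auto simp: nbr_def)
    fix e assume "e \<in> {e \<in> G. i \<in> e}"
    then obtain a b where "a < n" "b < n" "a \<noteq> b" "e = {a, b}" "e \<in> G" "i \<in> e"
      using regD_edge[OF assms(1)] by blast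
    then show "\<exists>x\<in>nbr G n i. e = {i, x}"
      unfolding nbr_def by (auto simp: insert_commute)
  qed
  then show ?thesis using regD_deg[OF assms] by (simp add: bij_betw_same_card)
qed


lemma nbr_sub: "nbr G n i \<subseteq> {..<n}" unfolding nbr_def by auto

lemma avg_step_nbr: "avg_step d n G y i = (y i + (\<Sum>j\<in>nbr G n i. y j)) / real d"
  unfolding avg_step_def nbr_def by simp

lemma sum_nbr_ind: "(\<Sum>j\<in>nbr G n i. f j) = (\<Sum>j<n. if {i,j} \<in> G then f j else 0)"
  unfolding nbr_def by (simp add: sum.If_cases Int_def conj_commute lessThan_def)

lemma double_count:
  assumes "G \<in> regular_graphs n k"
  shows "(\<Sum>i<n. \<Sum>j\<in>nbr G n i. f j) = real k * (\<Sum>j<n. f j)"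
proof -
  have "(\<Sum>i<n. \<Sum>j\<in>nbr G n i. f j) = (\<Sum>i<n. \<Sum>j<n. if {i,j} \<in> G then f j else 0)"
    by (simp add: sum_nbr_ind)
  also have "\<dots> = (\<Sum>j<n. \<Sum>i<n. if {i,j} \<in> G then f j else 0)" by (rule sum.swap)
  also have "\<dots> = (\<Sum>j<n. \<Sum>i\<in>nbr G n j. f j)"
  proof (rule sum.cong[OF refl])
    fix j show "(\<Sum>i<n. if {i,j} \<in> G then f j else 0) = (\<Sum>i\<in>nbr G n j. f j)"
      unfolding sum_nbr_ind by (simp add: insert_commute)
  qed
  also have "\<dots> = (\<Sum>j<n. real k * f j)" using card_nbr[OF assms] by simp
  finally show ?thesis by (simp add: sum_distrib_left)
qed

lemma mean_preserved:
  assumes "G \<in> regular_graphs n (d - 1)" "d > 0"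
  shows "(\<Sum>i<n. avg_step d n G y i) = (\<Sum>i<n. y i)"
proof -
  have "(\<Sum>i<n. avg_step d n G y i) = ((\<Sum>i<n. y i) + (\<Sum>i<n. \<Sum>j\<in>nbr G n i. y j)) / real d"
    by (simp add: avg_step_nbr sum_divide_distrib[symmetric] sum.distrib)
  also have "\<dots> = ((\<Sum>i<n. y i) + real (d - 1) * (\<Sum>i<n. y i)) / real d"
    using double_count[OF assms(1)] by simp
  also have "\<dots> = (\<Sum>i<n. y i)" using assms(2) by (simp add: of_nat_diff field_simps)
  finally show ?thesis .
qed

lemma cs_sum: "(\<Sum>j\<in>N. z j)^2 \<le> real (card N) * (\<Sum>j\<in>N. (z j)^2)"
proof (cases "finite N")
  case True
  have "0 \<le> (\<Sum>j\<in>N. \<Sum>k\<in>N. (z j - z k)^2)" by (intro sum_nonneg) auto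
  also have "\<dots> = 2 * (real (card N) * (\<Sum>j\<in>N. (z j)^2) - (\<Sum>j\<in>N. z j)^2)"
    by (simp add: power2_diff sum.distrib sum_subtractf sum_distrib_left sum_distrib_right
        power2_eq_square algebra_simps)
  finally show ?thesis by simp
qed simp

lemma vertex_ineq:
  fixes zi :: real and z :: "nat \<Rightarrow> real"
  assumes "card N = d - 1" "d > 1" "finite N"
  shows "((zi + (\<Sum>j\<in>N. z j)) / real d)^2 \<le> (zi^2 + (\<Sum>j\<in>N. (z j)^2)) / real d
          - (\<Sum>j\<in>N. (zi - z j)^2) / (real d)^2"
proof -
  define A where "A = (\<Sum>j\<in>N. z j)"
  define B where "B = (\<Sum>j\<in>N. (z j)^2)"
  define m where "m = real (d - 1)"
  have md: "real d = m + 1" using assms(2) by (simp add: m_def of_nat_diff)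
  have cs: "A^2 \<le> m * B" using cs_sum[of z N] assms(1) by (simp add: A_def B_def m_def)
  have e: "(\<Sum>j\<in>N. (zi - z j)^2) = m * zi^2 - 2 * zi * A + B"
  proof -
    have "(\<Sum>j\<in>N. (zi - z j)^2) = (\<Sum>j\<in>N. zi^2 + (z j)^2 - 2 * zi * z j)"
      by (simp add: power2_diff)
    also have "\<dots> = real (card N) * zi^2 + B - (2 * zi) * A"
      by (simp add: sum.distrib sum_subtractf sum_distrib_left[symmetric] A_def B_def mult.assoc)
    finally show ?thesis using assms(1) by (simp add: m_def)
  qed
  have dpos: "real d > 0" using assms by simp
  have "real d * (zi^2 + B) - (m * zi^2 - 2 * zi * A + B) - (zi + A)^2 = m * B - A^2"
    unfolding md by (simp add: power2_eq_square algebra_simps)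
  then have "(zi + A)^2 \<le> real d * (zi^2 + B) - (m * zi^2 - 2 * zi * A + B)"
    using cs by linarith
  then have "((zi + A) / real d)^2 \<le> (real d * (zi^2 + B) - (m * zi^2 - 2 * zi * A + B)) / (real d)^2"
    using dpos by (simp add: power_divide divide_right_mono)
  also have "\<dots> = (zi^2 + B) / real d - (m * zi^2 - 2 * zi * A + B) / (real d)^2"
    using dpos by (simp add: field_simps power2_eq_square)
  finally show ?thesis unfolding e A_def B_def .
qed

lemma var_step:
  assumes G: "G \<in> regular_graphs n (d - 1)" and d: "d > 1"
  shows "(\<Sum>i<n. (avg_step d n G y i - c)^2) \<le> (\<Sum>i<n. (y i - c)^2)
          - (\<Sum>i<n. \<Sum>j\<in>nbr G n i. (y i - y j)^2) / (real d)^2"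
proof -
  have fin: "\<And>i. finite (nbr G n i)" by (rule finite_subset[OF nbr_sub]) simp
  have eq: "avg_step d n G y i - c = ((y i - c) + (\<Sum>j\<in>nbr G n i. (y j - c))) / real d"
    if "i < n" for i
  proof -
    have "(\<Sum>j\<in>nbr G n i. (y j - c)) = (\<Sum>j\<in>nbr G n i. y j) - real (d - 1) * c"
      using card_nbr[OF G that] by (simp add: sum_subtractf)
    then show ?thesis using d by (simp add: avg_step_nbr field_simps of_nat_diff)
  qed
  have "(\<Sum>i<n. (avg_step d n G y i - c)^2) \<le> (\<Sum>i<n. ((y i - c)^2 + (\<Sum>j\<in>nbr G n i. (y j - c)^2)) / real d
          - (\<Sum>j\<in>nbr G n i. ((y i - c) - (y j - c))^2) / (real d)^2)"
  proof (rule sum_mono)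
    fix i assume i: "i \<in> {..<n}"
    show "(avg_step d n G y i - c)^2 \<le> ((y i - c)^2 + (\<Sum>j\<in>nbr G n i. (y j - c)^2)) / real d
          - (\<Sum>j\<in>nbr G n i. ((y i - c) - (y j - c))^2) / (real d)^2"
      unfolding eq[OF i[simplified]]
      by (rule vertex_ineq[OF card_nbr[OF G i[simplified]] d fin])
  qed
  also have "\<dots> = ((\<Sum>i<n. (y i - c)^2) + (\<Sum>i<n. \<Sum>j\<in>nbr G n i. (y j - c)^2)) / real d
       - (\<Sum>i<n. \<Sum>j\<in>nbr G n i. (y i - y j)^2) / (real d)^2"
    by (simp add: sum_subtractf sum_divide_distrib[symmetric] sum.distrib)
  also have "\<dots> = (\<Sum>i<n. (y i - c)^2) - (\<Sum>i<n. \<Sum>j\<in>nbr G n i. (y i - y j)^2) / (real d)^2"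
    using double_count[OF G, of "\<lambda>j. (y j - c)^2"] d by (simp add: field_simps of_nat_diff)
  finally show ?thesis .
qed

definition sw :: "nat \<Rightarrow> nat \<Rightarrow> nat \<Rightarrow> nat" where
  "sw a b x = (if x = a then b else if x = b then a else x)"

lemma sw_sw[simp]: "sw a b (sw a b x) = x" unfolding sw_def by auto
lemma sw_inj: "inj (sw a b)" by (metis injI sw_sw)
lemma sw_lt: "a < n \<Longrightarrow> b < n \<Longrightarrow> x < n \<Longrightarrow> sw a b x < n" unfolding sw_def by auto

definition Phi :: "(nat \<Rightarrow> nat) \<Rightarrow> nat set set \<Rightarrow> nat set set" where
  "Phi f G = (\<lambda>e. f ` e) ` G"

lemma sw_img_img[simp]: "sw a b ` (sw a b ` e) = e"
  by (simp add: image_image)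

lemma Phi_sw_sw[simp]: "Phi (sw a b) (Phi (sw a b) G) = G"
  unfolding Phi_def by (simp add: image_image)

lemma Phi_reg:
  assumes G: "G \<in> regular_graphs n k" and ab: "a < n" "b < n"
  shows "Phi (sw a b) G \<in> regular_graphs n k"
proof -
  let ?t = "sw a b"
  have sub: "Phi ?t G \<subseteq> simple_edges n"
  proof
    fix e' assume "e' \<in> Phi ?t G"
    then obtain e where e: "e \<in> G" "e' = ?t ` e" unfolding Phi_def by auto
    then obtain i j where "i < n" "j < n" "i \<noteq> j" "e = {i, j}" using regD_edge[OF G] by blast
    then have "e' = {?t i, ?t j}" "?t i \<noteq> ?t j" "?t i < n" "?t j < n"
      using e sw_lt[OF ab] by (auto, metis sw_sw)
    then show "e' \<in> simple_edges n" unfolding simple_edges_def by blast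
  qed
  have deg: "card {e'\<in>Phi ?t G. i \<in> e'} = k" if i: "i < n" for i
  proof -
    have "{e'\<in>Phi ?t G. i \<in> e'} = (\<lambda>e. ?t ` e) ` {e\<in>G. ?t i \<in> e}"
    proof safe
      fix e' assume "e' \<in> Phi ?t G" "i \<in> e'"
      then obtain e where "e \<in> G" "e' = ?t ` e" unfolding Phi_def by auto
      then show "e' \<in> (\<lambda>e. ?t ` e) ` {e\<in>G. ?t i \<in> e}"
        using \<open>i \<in> e'\<close> by (auto intro!: image_eqI[where x = e])
    next
      fix e assume "e \<in> G" "?t i \<in> e"
      then show "?t ` e \<in> Phi ?t G" unfolding Phi_def by auto
      show "i \<in> ?t ` e" using \<open>?t i \<in> e\<close> by (rule rev_image_eqI) simp
    qed
    moreover have "inj_on (\<lambda>e. ?t ` e) {e\<in>G. ?t i \<in> e}"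
      by (rule inj_onI) (metis sw_img_img)
    ultimately have "card {e'\<in>Phi ?t G. i \<in> e'} = card {e\<in>G. ?t i \<in> e}"
      by (simp add: card_image)
    also have "\<dots> = k" by (rule regD_deg[OF G sw_lt[OF ab i]])
    finally show ?thesis .
  qed
  show ?thesis unfolding regular_graphs_def using sub deg by blast
qed

definition qc :: "nat \<Rightarrow> nat \<Rightarrow> nat set \<Rightarrow> nat" where
  "qc n k e = card {G\<in>regular_graphs n k. e \<in> G}"

lemma qc_sw:
  assumes ab: "a < n" "b < n"
  shows "qc n k e = qc n k (sw a b ` e)"
proof -
  have "bij_betw (Phi (sw a b)) {G\<in>regular_graphs n k. e \<in> G} {G\<in>regular_graphs n k. sw a b ` e \<in> G}"
  proof (rule bij_betwI[where g = "Phi (sw a b)"])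
    show "Phi (sw a b) \<in> {G \<in> regular_graphs n k. e \<in> G} \<rightarrow> {G \<in> regular_graphs n k. sw a b ` e \<in> G}"
      using Phi_reg[OF _ ab] by (auto simp: Phi_def)
    have "\<And>G. sw a b ` e \<in> G \<Longrightarrow> e \<in> Phi (sw a b) G"
      unfolding Phi_def by (rule image_eqI[where x = "sw a b ` e"]) (auto simp: image_image)
    then show "Phi (sw a b) \<in> {G \<in> regular_graphs n k. sw a b ` e \<in> G} \<rightarrow> {G \<in> regular_graphs n k. e \<in> G}"
      using Phi_reg[OF _ ab] by auto
  qed auto
  then show ?thesis unfolding qc_def by (rule bij_betw_same_card)
qed

lemma qc_const:
  assumes "i < n" "j < n" "i \<noteq> j" "1 < n"
  shows "qc n k {i, j} = qc n k {0, 1}"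
proof -
  define j' where "j' = sw 0 i 1"
  have 1: "qc n k {0, 1} = qc n k {i, j'}"
    using qc_sw[of 0 n i k "{0,1}"] assms by (simp add: j'_def sw_def)
  have "j' < n" using assms sw_lt[of 0 n i 1] by (simp add: j'_def)
  have "i \<noteq> j'" unfolding j'_def sw_def by auto
  have 2: "qc n k {i, j'} = qc n k {i, j}"
    using qc_sw[of j' n j k "{i,j'}"] assms \<open>j' < n\<close> \<open>i \<noteq> j'\<close> by (simp add: sw_def)
  show ?thesis using 1 2 by simp
qed

lemma sum_ind_card: "finite R \<Longrightarrow> (\<Sum>G\<in>R. if P G then (1::real) else 0) = real (card {G\<in>R. P G})"
proof -
  assume True: "finite R"
  have "{G\<in>R. P G} = R \<inter> {G. P G}" by blast
  then show ?thesis using True by (simp add: sum.If_cases)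
qed

lemma pair_identity:
  fixes z :: "nat \<Rightarrow> real"
  shows "(\<Sum>j\<in>N. \<Sum>k\<in>N. (z j - z k)^2) = 2 * (real (card N) * (\<Sum>j\<in>N. (z j)^2) - (\<Sum>j\<in>N. z j)^2)"
proof (cases "finite N")
  case True
  show ?thesis
    by (simp add: power2_diff sum.distrib sum_subtractf sum_distrib_left sum_distrib_right
        power2_eq_square algebra_simps)
qed simp

lemma qc_self: "qc n k {i} = 0"
proof -
  have "{G\<in>regular_graphs n k. {i} \<in> G} = {}"
  proof (rule ccontr)
    assume "{G\<in>regular_graphs n k. {i} \<in> G} \<noteq> {}"
    then obtain G where "G \<in> regular_graphs n k" "{i} \<in> G" by blast
    then obtain a b where "a \<noteq> b" "{i} = {a, b}" using regD_edge by blast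
    moreover have "a \<in> {a,b}" "b \<in> {a,b}" by simp_all
    ultimately show False by (metis singletonD)
  qed
  then show ?thesis unfolding qc_def by (simp only: card.empty)
qed

lemma expD:
  assumes n: "1 < n" and f0: "\<And>i. f i i = 0"
  shows "(\<Sum>G\<in>regular_graphs n k. \<Sum>i<n. \<Sum>j\<in>nbr G n i. f i j)
        = real (qc n k {0,1}) * (\<Sum>i<n. \<Sum>j<n. f i j)"
proof -
  let ?R = "regular_graphs n k"
  have "(\<Sum>G\<in>?R. \<Sum>i<n. \<Sum>j\<in>nbr G n i. f i j) = (\<Sum>G\<in>?R. \<Sum>i<n. \<Sum>j<n. if {i,j} \<in> G then f i j else 0)"
    by (simp add: sum_nbr_ind)
  also have "\<dots> = (\<Sum>i<n. \<Sum>G\<in>?R. \<Sum>j<n. if {i,j} \<in> G then f i j else 0)" by (rule sum.swap)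
  also have "\<dots> = (\<Sum>i<n. \<Sum>j<n. \<Sum>G\<in>?R. if {i,j} \<in> G then f i j else 0)"
    by (rule sum.cong[OF refl], rule sum.swap)
  also have "\<dots> = (\<Sum>i<n. \<Sum>j<n. f i j * real (qc n k {0,1}))"
  proof (intro sum.cong refl)
    fix i j assume "i \<in> {..<n}" "j \<in> {..<n}"
    have "(\<Sum>G\<in>?R. if {i,j} \<in> G then f i j else 0) = f i j * (\<Sum>G\<in>?R. if {i,j} \<in> G then 1 else 0)"
      by (simp add: sum_distrib_left if_distrib cong: if_cong)
    also have "\<dots> = f i j * real (qc n k {i,j})" unfolding sum_ind_card[OF finite_regular_graphs] qc_def ..
    also have "\<dots> = f i j * real (qc n k {0,1})"
      using qc_const[of i n j k] \<open>i \<in> _\<close> \<open>j \<in> _\<close> n f0 by (cases "i = j") auto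
    finally show "(\<Sum>G\<in>?R. if {i,j} \<in> G then f i j else 0) = f i j * real (qc n k {0,1})" .
  qed
  finally show ?thesis by (simp add: sum_distrib_left sum_distrib_right mult.commute)
qed

lemma sum_first_only:
  fixes n :: nat
  assumes "0 < n"
  shows "(\<Sum>i<n. \<Sum>j\<in>X i. (if i = 0 \<and> j \<noteq> 0 then 1 else 0::real)) = (\<Sum>j\<in>X 0. if j \<noteq> 0 then 1 else 0)"
proof -
  have "(\<Sum>i<n. \<Sum>j\<in>X i. (if i = 0 \<and> j \<noteq> 0 then 1 else 0::real))
      = (\<Sum>i<n. if i = 0 then (\<Sum>j\<in>X 0. if j \<noteq> 0 then 1 else 0::real) else 0)"
    by (rule sum.cong) auto
  also have "\<dots> = (\<Sum>j\<in>X 0. if j \<noteq> 0 then 1 else 0::real)"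
    by (subst sum.delta) (use assms in auto)
  finally show ?thesis .
qed

lemma qc_count:
  assumes n: "1 < n"
  shows "real (qc n k {0,1}) * real (n - 1) = real k * real (card (regular_graphs n k))"
proof -
  let ?R = "regular_graphs n k"
  let ?f = "\<lambda>(i::nat) (j::nat). (if i = 0 \<and> j \<noteq> 0 then 1 else 0::real)"
  have "(\<Sum>G\<in>?R. \<Sum>i<n. \<Sum>j\<in>nbr G n i. ?f i j) = real (qc n k {0,1}) * (\<Sum>i<n. \<Sum>j<n. ?f i j)"
    by (rule expD[OF n]) auto
  also have "(\<Sum>i<n. \<Sum>j<n. ?f i j) = real (n - 1)"
  proof -
    have "(\<Sum>i<n. \<Sum>j<n. ?f i j) = (\<Sum>j<n. if j \<noteq> 0 then 1 else 0::real)"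
      using sum_first_only[of n "\<lambda>_. {..<n}"] n by auto
    also have "\<dots> = real (card ({..<n} - {0}))"
    proof -
      have "{..<n} \<inter> {j. j \<noteq> 0} = {..<n} - {0::nat}" by auto
      then show ?thesis by (simp add: sum.If_cases)
    qed
    also have "\<dots> = real (n - 1)" using n by simp
    finally show ?thesis .
  qed
  also have "(\<Sum>G\<in>?R. \<Sum>i<n. \<Sum>j\<in>nbr G n i. ?f i j) = (\<Sum>G\<in>?R. real k)"
  proof (rule sum.cong[OF refl])
    fix G assume G: "G \<in> ?R"
    have "(\<Sum>i<n. \<Sum>j\<in>nbr G n i. ?f i j) = (\<Sum>j\<in>nbr G n 0. if j \<noteq> 0 then 1 else 0::real)"
      using sum_first_only[of n "nbr G n"] n by simp
    also have "\<dots> = (\<Sum>j\<in>nbr G n 0. 1)"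
      using nbr_not_self[OF G, of 0] by (intro sum.cong refl) (metis)
    also have "\<dots> = real k" using card_nbr[OF G, of 0] n by simp
    finally show "(\<Sum>i<n. \<Sum>j\<in>nbr G n i. ?f i j) = real k" .
  qed
  finally show ?thesis by (simp add: mult.commute)
qed

lemma exp_decay:
  assumes d: "d > 1" and n: "n > 1"
    and m: "m = (\<Sum>i<n. y i) / real n"
  shows "(\<Sum>G\<in>regular_graphs n (d-1). \<Sum>i<n. (avg_step d n G y i - m)^2)
     \<le> (1 - 2 * (real d - 1) / (real d)^2) * real (card (regular_graphs n (d-1))) * (\<Sum>i<n. (y i - m)^2)"
proof -
  let ?R = "regular_graphs n (d-1)"
  define W where "W = (\<Sum>i<n. (y i - m)^2)"
  define DG where "DG G = (\<Sum>i<n. \<Sum>j\<in>nbr G n i. (y i - y j)^2)" for G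
  have W0: "W \<ge> 0" unfolding W_def by (intro sum_nonneg) auto
  have sz: "(\<Sum>i<n. (y i - m)) = 0"
    using n m by (simp add: sum_subtractf)
  have pairs: "(\<Sum>i<n. \<Sum>j<n. (y i - y j)^2) = 2 * real n * W"
  proof -
    have "(\<Sum>i<n. \<Sum>j<n. (y i - y j)^2) = (\<Sum>i<n. \<Sum>j<n. ((y i - m) - (y j - m))^2)" by simp
    also have "\<dots> = 2 * (real (card {..<n}) * W - (\<Sum>i<n. (y i - m))^2)"
      unfolding W_def by (rule pair_identity)
    finally show ?thesis using sz by simp
  qed
  have Dsum: "(\<Sum>G\<in>?R. DG G) = real (qc n (d-1) {0,1}) * (2 * real n * W)"
    unfolding DG_def pairs[symmetric] by (rule expD[OF n]) simp
  have qc: "real (qc n (d-1) {0,1}) * real (n - 1) = real (d - 1) * real (card ?R)"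
    by (rule qc_count[OF n])
  have n1: "real (n - 1) > 0" using n by simp
  have "real (qc n (d-1) {0,1}) * (2 * real n * W) \<ge> real (qc n (d-1) {0,1}) * real (n - 1) * (2 * W)"
  proof -
    have "real (n - 1) * (2 * W) \<le> real n * (2 * W)" using W0 by (intro mult_right_mono) auto
    then show ?thesis by (simp add: mult.assoc mult_left_mono)
  qed
  then have DL: "(\<Sum>G\<in>?R. DG G) \<ge> 2 * (real d - 1) * real (card ?R) * W"
  proof -
    have "real (qc n (d-1) {0,1}) * real (n - 1) * (2 * W) = 2 * (real d - 1) * real (card ?R) * W"
      unfolding qc using d by (simp add: of_nat_diff)
    then show ?thesis unfolding Dsum using \<open>_ \<ge> real (qc n (d-1) {0,1}) * real (n - 1) * (2 * W)\<close> by linarith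
  qed
  have "(\<Sum>G\<in>?R. \<Sum>i<n. (avg_step d n G y i - m)^2) \<le> (\<Sum>G\<in>?R. W - DG G / (real d)^2)"
    unfolding W_def DG_def by (rule sum_mono, rule var_step) (use d in auto)
  also have "\<dots> = real (card ?R) * W - (\<Sum>G\<in>?R. DG G) / (real d)^2"
    by (simp add: sum_subtractf sum_divide_distrib)
  also have "\<dots> \<le> real (card ?R) * W - 2 * (real d - 1) * real (card ?R) * W / (real d)^2"
    using DL d by (simp add: divide_right_mono)
  also have "\<dots> = (1 - 2 * (real d - 1) / (real d)^2) * real (card ?R) * W"
    by (simp add: algebra_simps)
  finally show ?thesis unfolding W_def .
qed

lemma edge_props:
  assumes G: "G \<in> regular_graphs n k" and e: "{a, b} \<in> G"
  shows "a < n" "b < n" "a \<noteq> b"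
proof -
  obtain i j where ij: "i < n" "j < n" "i \<noteq> j" "{a, b} = {i, j}"
    using regD_edge[OF G e] by blast
  have ai: "a \<in> {i,j}" "b \<in> {i,j}" "i \<in> {a,b}" "j \<in> {a,b}" using ij(4) by (metis insertI1 insert_commute)+
  then show "a < n" "b < n" using ij by auto
  show "a \<noteq> b" using ai ij(3) by auto
qed

definition cl :: "nat set set \<Rightarrow> nat set \<Rightarrow> bool" where
  "cl G S \<longleftrightarrow> (\<forall>e\<in>G. e \<subseteq> S \<or> e \<inter> S = {})"

definition swG :: "nat set set \<Rightarrow> nat \<Rightarrow> nat \<Rightarrow> nat \<Rightarrow> nat \<Rightarrow> nat set set" where
  "swG G a b c d = (G - {{a,b},{c,d}}) \<union> {{a,c},{b,d}}"

lemma card_X: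
  assumes "a \<noteq> b" "c \<noteq> d" "a \<noteq> c" "a \<noteq> d" "b \<noteq> c" "b \<noteq> d"
  shows "card {e\<in>{{a,b},{c,d}}. i \<in> e} = (if i \<in> {a,b,c,d} then 1 else 0)"
    and "card {e\<in>{{a,c},{b,d}}. i \<in> e} = (if i \<in> {a,b,c,d} then 1 else 0)"
proof -
  have ne1: "{a,b} \<noteq> {c,d}" using assms by (auto simp: doubleton_eq_iff)
  have ne2: "{a,c} \<noteq> {b,d}" using assms by (auto simp: doubleton_eq_iff)
  have "{e\<in>{{a,b},{c,d}}. i \<in> e} = (if i \<in> {a,b} then {{a,b}} else {}) \<union> (if i \<in> {c,d} then {{c,d}} else {})"
    by auto
  then show "card {e\<in>{{a,b},{c,d}}. i \<in> e} = (if i \<in> {a,b,c,d} then 1 else 0)"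
    using assms ne1 by auto
  have "{e\<in>{{a,c},{b,d}}. i \<in> e} = (if i \<in> {a,c} then {{a,c}} else {}) \<union> (if i \<in> {b,d} then {{b,d}} else {})"
    by auto
  then show "card {e\<in>{{a,c},{b,d}}. i \<in> e} = (if i \<in> {a,b,c,d} then 1 else 0)"
    using assms ne2 by auto
qed

locale swset =
  fixes n k :: nat and S :: "nat set"
  assumes S: "S \<subseteq> {..<n}"
begin

definition "T = {..<n} - S"

definition "Dom = (SIGMA G:{G\<in>regular_graphs n k. cl G S}.
    {(a,b). a \<in> S \<and> {a,b} \<in> G} \<times> {(c,d). c \<in> T \<and> {c,d} \<in> G})"

lemma Dom_iff: "(G, (a,b), (c,d)) \<in> Dom \<longleftrightarrow> G \<in> regular_graphs n k \<and> cl G S \<and> a \<in> S \<and> {a,b} \<in> G \<and> c \<in> T \<and> {c,d} \<in> G"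
  unfolding Dom_def by simp

lemma dom_facts:
  assumes "(G, (a,b), (c,d)) \<in> Dom"
  shows "G \<in> regular_graphs n k" "cl G S" "a \<in> S" "b \<in> S" "c \<in> T" "d \<in> T"
    "{a,b} \<in> G" "{c,d} \<in> G" "a \<noteq> b" "c \<noteq> d" "a < n" "b < n" "c < n" "d < n"
    "{a,c} \<notin> G" "{b,d} \<notin> G"
proof -
  show G: "G \<in> regular_graphs n k" and clG: "cl G S" and a: "a \<in> S" and c: "c \<in> T"
    and ab: "{a,b} \<in> G" and cd: "{c,d} \<in> G"
    using assms unfolding Dom_iff by simp_all
  show "a \<noteq> b" "c \<noteq> d" "a < n" "b < n" "c < n" "d < n"
    using edge_props[OF G ab] edge_props[OF G cd] by auto
  have clG': "\<And>e. e \<in> G \<Longrightarrow> e \<subseteq> S \<or> e \<inter> S = {}" using clG unfolding cl_def by (rule bspec)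
  have "{a,b} \<subseteq> S \<or> {a,b} \<inter> S = {}" by (rule clG'[OF ab])
  then show b: "b \<in> S" using a by blast
  have "{c,d} \<subseteq> S \<or> {c,d} \<inter> S = {}" by (rule clG'[OF cd])
  moreover have "c \<notin> S" using c unfolding T_def by blast
  ultimately have "d \<notin> S" by blast
  then show d: "d \<in> T" unfolding T_def using \<open>d < n\<close> by blast
  show "{a,c} \<notin> G"
  proof
    assume "{a,c} \<in> G"
    then have "{a,c} \<subseteq> S \<or> {a,c} \<inter> S = {}" by (rule clG')
    then show False using a \<open>c \<notin> S\<close> by blast
  qed
  show "{b,d} \<notin> G"
  proof
    assume "{b,d} \<in> G"
    then have "{b,d} \<subseteq> S \<or> {b,d} \<inter> S = {}" by (rule clG')
    then show False using b \<open>d \<notin> S\<close> by blast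
  qed
qed

lemma dom_distinct:
  assumes "(G, (a,b), (c,d)) \<in> Dom"
  shows "a \<noteq> c" "a \<noteq> d" "b \<noteq> c" "b \<noteq> d" "c \<notin> S" "d \<notin> S"
  using dom_facts[OF assms] unfolding T_def by auto

lemma H_reg:
  assumes D: "(G, (a,b), (c,d)) \<in> Dom"
  shows "swG G a b c d \<in> regular_graphs n k"
proof -
  note F = dom_facts[OF D] and F2 = dom_distinct[OF D]
  let ?X = "{{a,b},{c,d}}" and ?Y = "{{a,c},{b,d}}"
  have G: "G \<in> regular_graphs n k" by (rule F(1))
  have finG: "finite G" by (rule reg_finite_G[OF G])
  have XG: "?X \<subseteq> G" using F(7,8) by blast
  have YG: "?Y \<inter> G = {}" using F(15,16) by blast
  have sub: "swG G a b c d \<subseteq> simple_edges n"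
  proof -
    have "G \<subseteq> simple_edges n" using G unfolding regular_graphs_def by blast
    moreover have "{a,c} \<in> simple_edges n" unfolding simple_edges_def using F F2 by blast
    moreover have "{b,d} \<in> simple_edges n" unfolding simple_edges_def using F F2 by blast
    ultimately show ?thesis unfolding swG_def by blast
  qed
  have deg: "card {e\<in>swG G a b c d. i \<in> e} = k" if i: "i < n" for i
  proof -
    have eq: "{e\<in>swG G a b c d. i \<in> e} = ({e\<in>G. i \<in> e} - {e\<in>?X. i \<in> e}) \<union> {e\<in>?Y. i \<in> e}"
      unfolding swG_def by blast
    have d1: "({e\<in>G. i \<in> e} - {e\<in>?X. i \<in> e}) \<inter> {e\<in>?Y. i \<in> e} = {}" using YG by blast
    have s1: "{e\<in>?X. i \<in> e} \<subseteq> {e\<in>G. i \<in> e}" using XG by blast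
    have f1: "finite {e\<in>G. i \<in> e}" using finG by simp
    have "card {e\<in>swG G a b c d. i \<in> e} = card ({e\<in>G. i \<in> e} - {e\<in>?X. i \<in> e}) + card {e\<in>?Y. i \<in> e}"
      unfolding eq by (rule card_Un_disjoint) (use f1 d1 in auto)
    also have "\<dots> = card {e\<in>G. i \<in> e} - card {e\<in>?X. i \<in> e} + card {e\<in>?Y. i \<in> e}"
      using card_Diff_subset[OF finite_subset[OF s1 f1] s1] by simp
    also have "card {e\<in>?X. i \<in> e} = card {e\<in>?Y. i \<in> e}"
      using card_X[OF F(9,10) F2(1-4)] by simp
    also have "card {e\<in>G. i \<in> e} - card {e\<in>?Y. i \<in> e} + card {e\<in>?Y. i \<in> e} = card {e\<in>G. i \<in> e}"
    proof -
      have "card {e\<in>?Y. i \<in> e} \<le> card {e\<in>G. i \<in> e}"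
        using card_mono[OF f1 s1] card_X[OF F(9,10) F2(1-4)] by simp
      then show ?thesis by simp
    qed
    also have "\<dots> = k" by (rule regD_deg[OF G i])
    finally show ?thesis .
  qed
  show ?thesis unfolding regular_graphs_def using sub deg by blast
qed

lemma H_cross:
  assumes D: "(G, (a,b), (c,d)) \<in> Dom"
  shows "{e\<in>swG G a b c d. \<not> (e \<subseteq> S \<or> e \<inter> S = {})} = {{a,c},{b,d}}"
proof -
  note F = dom_facts[OF D] and F2 = dom_distinct[OF D]
  have clG': "\<And>e. e \<in> G \<Longrightarrow> e \<subseteq> S \<or> e \<inter> S = {}" using F(2) unfolding cl_def by (rule bspec)
  have 1: "\<not> ({a,c} \<subseteq> S \<or> {a,c} \<inter> S = {})" using F(3) F2(5) by blast
  have 2: "\<not> ({b,d} \<subseteq> S \<or> {b,d} \<inter> S = {})" using F(4) F2(6) by blast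
  show ?thesis
  proof (rule set_eqI, rule iffI)
    fix e assume "e \<in> {e\<in>swG G a b c d. \<not> (e \<subseteq> S \<or> e \<inter> S = {})}"
    then have e: "e \<in> swG G a b c d" "\<not> (e \<subseteq> S \<or> e \<inter> S = {})" by simp_all
    show "e \<in> {{a,c},{b,d}}"
    proof (rule ccontr)
      assume "e \<notin> {{a,c},{b,d}}"
      then have "e \<in> G" using e(1) unfolding swG_def by blast
      then show False using clG' e(2) by blast
    qed
  next
    fix e assume "e \<in> {{a,c},{b,d}}"
    then show "e \<in> {e\<in>swG G a b c d. \<not> (e \<subseteq> S \<or> e \<inter> S = {})}"
      using 1 2 unfolding swG_def by auto
  qed
qed

lemma G_recover:
  assumes D: "(G, (a,b), (c,d)) \<in> Dom"
  shows "G = (swG G a b c d - {{a,c},{b,d}}) \<union> {{a,b},{c,d}}"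
proof -
  note F = dom_facts[OF D]
  show ?thesis unfolding swG_def using F(7,8,15,16) by blast
qed

lemma side_eq:
  assumes "{x,y} = {u,v}" "x \<in> S" "u \<in> S" "y \<notin> S" "v \<notin> S"
  shows "x = u \<and> y = v"
proof -
  have "(x = u \<and> y = v) \<or> (x = v \<and> y = u)" using assms(1) by (simp add: doubleton_eq_iff)
  then show ?thesis using assms(2-5) by blast
qed

lemma pairs_eq:
  assumes a1: "a1 \<in> S" and b1: "b1 \<in> S" and a2: "a2 \<in> S" and b2: "b2 \<in> S"
    and c1: "c1 \<notin> S" and d1: "d1 \<notin> S" and c2: "c2 \<notin> S" and d2: "d2 \<notin> S"
    and ab1: "a1 \<noteq> b1" and ab2: "a2 \<noteq> b2" and E: "{{a1,c1},{b1,d1}} = {{a2,c2},{b2,d2}}" and O: "(a1 < b1) = (a2 < b2)"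
  shows "a1 = a2 \<and> b1 = b2 \<and> c1 = c2 \<and> d1 = d2"
proof -
  have "{a1,c1} \<in> {{a2,c2},{b2,d2}}" unfolding E[symmetric] by simp
  then have m1: "{a1,c1} = {a2,c2} \<or> {a1,c1} = {b2,d2}" by simp
  have "{b1,d1} \<in> {{a2,c2},{b2,d2}}" unfolding E[symmetric] by simp
  then have m2: "{b1,d1} = {a2,c2} \<or> {b1,d1} = {b2,d2}" by simp
  show ?thesis
  proof (cases "{a1,c1} = {a2,c2}")
    case True
    have x: "a1 = a2 \<and> c1 = c2" by (rule side_eq[OF True a1 a2 c1 c2])
    have "{b1,d1} \<noteq> {a2,c2}"
    proof
      assume h: "{b1,d1} = {a2,c2}"
      have "b1 = a2 \<and> d1 = c2" by (rule side_eq[OF h b1 a2 d1 c2])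
      then show False using x ab1 by simp
    qed
    then have h: "{b1,d1} = {b2,d2}" using m2 by simp
    have "b1 = b2 \<and> d1 = d2" by (rule side_eq[OF h b1 b2 d1 d2])
    then show ?thesis using x by simp
  next
    case False
    then have h0: "{a1,c1} = {b2,d2}" using m1 by simp
    have x: "a1 = b2 \<and> c1 = d2" by (rule side_eq[OF h0 a1 b2 c1 d2])
    have "{b1,d1} \<noteq> {b2,d2}"
    proof
      assume h: "{b1,d1} = {b2,d2}"
      have "b1 = b2 \<and> d1 = d2" by (rule side_eq[OF h b1 b2 d1 d2])
      then show False using x ab1 by simp
    qed
    then have h: "{b1,d1} = {a2,c2}" using m2 by simp
    have "b1 = a2 \<and> d1 = c2" by (rule side_eq[OF h b1 a2 d1 c2])
    then have False using x O ab2 by auto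
    then show ?thesis ..
  qed
qed

definition "Fm = (\<lambda>(G, (a::nat, b::nat), (c::nat, d::nat)). (swG G a b c d, a < b))"

lemma Fm_inj: "inj_on Fm Dom"
proof (rule inj_onI)
  fix x y assume x: "x \<in> Dom" and y: "y \<in> Dom" and eq: "Fm x = Fm y"
  obtain G1 a1 b1 c1 d1 where x1: "x = (G1, (a1,b1), (c1,d1))" by (metis prod.collapse)
  obtain G2 a2 b2 c2 d2 where y1: "y = (G2, (a2,b2), (c2,d2))" by (metis prod.collapse)
  note D1 = x[unfolded x1] and D2 = y[unfolded y1]
  have H: "swG G1 a1 b1 c1 d1 = swG G2 a2 b2 c2 d2" and O: "(a1 < b1) = (a2 < b2)"
    using eq unfolding x1 y1 Fm_def by simp_all
  have E: "{{a1,c1},{b1,d1}} = {{a2,c2},{b2,d2}}"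
    using H_cross[OF D1] H_cross[OF D2] H by simp
  have "a1 = a2 \<and> b1 = b2 \<and> c1 = c2 \<and> d1 = d2"
    using pairs_eq[OF dom_facts(3,4)[OF D1] dom_facts(3,4)[OF D2] dom_distinct(5,6)[OF D1]
       dom_distinct(5,6)[OF D2] dom_facts(9)[OF D1] dom_facts(9)[OF D2] E O] .
  moreover have "G1 = G2"
    using G_recover[OF D1] G_recover[OF D2] H \<open>a1 = a2 \<and> b1 = b2 \<and> c1 = c2 \<and> d1 = d2\<close> by simp
  ultimately show "x = y" unfolding x1 y1 by simp
qed

lemma card_pairs:
  assumes G: "G \<in> regular_graphs n k" and A: "A \<subseteq> {..<n}"
  shows "card {(a,b). a \<in> A \<and> {a,b} \<in> G} = card A * k"
proof -
  have "{(a,b). a \<in> A \<and> {a,b} \<in> G} = (SIGMA a:A. nbr G n a)"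
    unfolding nbr_def using edge_props[OF G] by auto
  moreover have "finite A" using A finite_subset by blast
  moreover have "\<And>a. finite (nbr G n a)" using nbr_sub finite_subset by (metis finite_lessThan)
  ultimately have "card {(a,b). a \<in> A \<and> {a,b} \<in> G} = (\<Sum>a\<in>A. card (nbr G n a))"
    by (simp add: card_SigmaI)
  also have "\<dots> = (\<Sum>a\<in>A. k)" using card_nbr[OF G] A by (intro sum.cong) auto
  finally show ?thesis by simp
qed

lemma card_Dom: "card Dom = card {G\<in>regular_graphs n k. cl G S} * (card S * k) * (card T * k)"
proof -
  have T: "T \<subseteq> {..<n}" unfolding T_def by blast
  have fin: "finite {G\<in>regular_graphs n k. cl G S}" using finite_regular_graphs by simp
  have fp: "\<And>G A. G \<in> regular_graphs n k \<Longrightarrow> A \<subseteq> {..<n} \<Longrightarrow> finite {(a,b). a \<in> A \<and> {a,b} \<in> G}"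
  proof -
    fix G A assume G: "G \<in> regular_graphs n k" and A: "A \<subseteq> {..<n}"
    have "{(a,b). a \<in> A \<and> {a,b} \<in> G} \<subseteq> {..<n} \<times> {..<n}"
      using edge_props[OF G] by auto
    then show "finite {(a,b). a \<in> A \<and> {a,b} \<in> G}" by (rule finite_subset) simp
  qed
  have "card Dom = (\<Sum>G\<in>{G\<in>regular_graphs n k. cl G S}.
      card ({(a,b). a \<in> S \<and> {a,b} \<in> G} \<times> {(c,d). c \<in> T \<and> {c,d} \<in> G}))"
    unfolding Dom_def by (rule card_SigmaI[OF fin]) (use fp S T in auto)
  also have "\<dots> = (\<Sum>G\<in>{G\<in>regular_graphs n k. cl G S}. (card S * k) * (card T * k))"
    by (intro sum.cong refl) (use card_pairs S T in \<open>auto simp: card_cartesian_product\<close>)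
  finally show ?thesis by simp
qed

lemma switch_count: "card {G\<in>regular_graphs n k. cl G S} * (card S * k) * (card T * k) \<le> 2 * card (regular_graphs n k)"
proof -
  have "Fm ` Dom \<subseteq> regular_graphs n k \<times> UNIV"
  proof
    fix y assume "y \<in> Fm ` Dom"
    then obtain x where x: "x \<in> Dom" "y = Fm x" by blast
    obtain G a b c d where x1: "x = (G, (a,b), (c,d))" by (metis prod.collapse)
    show "y \<in> regular_graphs n k \<times> UNIV" using H_reg[OF x(1)[unfolded x1]] x(2) x1 by (simp add: Fm_def)
  qed
  moreover have "finite (regular_graphs n k \<times> (UNIV :: bool set))" using finite_regular_graphs by simp
  ultimately have "card Dom \<le> card (regular_graphs n k \<times> (UNIV :: bool set))"
    using card_inj_on_le[OF Fm_inj] by blast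
  then show ?thesis unfolding card_Dom by (simp add: card_cartesian_product)
qed

end

definition thr :: "nat \<Rightarrow> (nat \<Rightarrow> real) \<Rightarrow> real \<Rightarrow> nat set" where
  "thr n y a = {i. i < n \<and> y i \<le> a}"

definition Ivl :: "(nat \<Rightarrow> real) \<Rightarrow> nat \<Rightarrow> nat \<Rightarrow> real set" where
  "Ivl y i j = {min (y i) (y j) .. max (y i) (y j)}"

lemma eu_iff: "x \<in> edge_union G y \<longleftrightarrow> (\<exists>i j. {i,j} \<in> G \<and> i \<noteq> j \<and> x \<in> Ivl y i j)"
  unfolding edge_union_def Ivl_def by blast

lemma Ivl_sub: "{i,j} \<in> G \<Longrightarrow> i \<noteq> j \<Longrightarrow> Ivl y i j \<subseteq> edge_union G y"
  using eu_iff by blast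

lemma Ivl_ends: "y i \<in> Ivl y i j" "y j \<in> Ivl y i j"
  unfolding Ivl_def by auto

lemma eu_closed:
  assumes G: "G \<in> regular_graphs n k"
  shows "closed (edge_union G y)"
proof -
  let ?P = "{(i,j). {i,j} \<in> G \<and> i \<noteq> j}"
  have "?P \<subseteq> {..<n} \<times> {..<n}" using edge_props[OF G] by auto
  then have fin: "finite ?P" by (rule finite_subset) simp
  have "edge_union G y = (\<Union>p\<in>?P. Ivl y (fst p) (snd p))"
    unfolding eu_iff[abs_def] by (auto simp: set_eq_iff eu_iff)
  moreover have "closed (\<Union>p\<in>?P. Ivl y (fst p) (snd p))"
    by (rule closed_UN[OF fin]) (simp add: Ivl_def)
  ultimately show ?thesis by simp
qed

lemma coord_bound:
  fixes y :: "nat \<Rightarrow> real"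
  assumes "i < n"
  shows "\<bar>y i - c\<bar> \<le> sqrt (\<Sum>i<n. (y i - c)^2)"
proof -
  have "(y i - c)^2 \<le> (\<Sum>i<n. (y i - c)^2)"
    using assms by (intro member_le_sum) auto
  then have "sqrt ((y i - c)^2) \<le> sqrt (\<Sum>i<n. (y i - c)^2)" by (rule real_sqrt_le_mono)
  then show ?thesis by simp
qed

lemma eu_bound:
  assumes G: "G \<in> regular_graphs n k" and x: "x \<in> edge_union G y"
  shows "\<bar>x - c\<bar> \<le> sqrt (\<Sum>i<n. (y i - c)^2)"
proof -
  obtain i j where ij: "{i,j} \<in> G" "i \<noteq> j" "x \<in> Ivl y i j" using x eu_iff by blast
  have "i < n" "j < n" using edge_props[OF G ij(1)] by auto
  then have "\<bar>y i - c\<bar> \<le> sqrt (\<Sum>i<n. (y i - c)^2)" "\<bar>y j - c\<bar> \<le> sqrt (\<Sum>i<n. (y i - c)^2)"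
    using coord_bound by blast+
  then show ?thesis using ij(3) unfolding Ivl_def by (auto simp: abs_le_iff)
qed

locale compl =
  fixes G :: "nat set set" and n k :: nat and y :: "nat \<Rightarrow> real"
  assumes G: "G \<in> regular_graphs n k"
begin

abbreviation "U \<equiv> edge_union G y"

definition "Wc c = (\<Sum>i<n. (y i - c)^2)"

lemma U_bdd: "x \<in> U \<Longrightarrow> \<bar>x - c\<bar> \<le> sqrt (Wc c)"
  unfolding Wc_def by (rule eu_bound[OF G])

context
  fixes C assumes C: "C \<in> components U"
begin

lemma C_sub: "C \<subseteq> U" using C by (rule in_components_subset)
lemma C_ne: "C \<noteq> {}" using C by (rule in_components_nonempty)
lemma C_closed: "closed C" using eu_closed[OF G] C by (rule closed_components)
lemma C_conn: "connected C" using C by (rule in_components_connected)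

lemma C_bdd: "x \<in> C \<Longrightarrow> \<bar>x - c\<bar> \<le> sqrt (Wc c)"
  using C_sub U_bdd by blast

lemma C_bdd_above: "bdd_above C"
  using C_bdd[of _ 0] by (intro bdd_aboveI[where M = "sqrt (Wc 0)"]) (auto simp: abs_le_iff)

lemma C_bdd_below: "bdd_below C"
proof (rule bdd_belowI[where m = "- sqrt (Wc 0)"])
  fix x assume "x \<in> C"
  then have "\<bar>x - 0\<bar> \<le> sqrt (Wc 0)" by (rule C_bdd)
  then show "- sqrt (Wc 0) \<le> x" by linarith
qed

lemma C_Sup: "Sup C \<in> C"
  by (rule closed_contains_Sup[OF C_ne C_bdd_above C_closed])

lemma C_Inf: "Inf C \<in> C"
  by (rule closed_contains_Inf[OF C_ne C_bdd_below C_closed])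

lemma C_le_Sup: "x \<in> C \<Longrightarrow> x \<le> Sup C"
  by (rule cSup_upper[OF _ C_bdd_above])

lemma C_Ivl:
  assumes "{i,j} \<in> G" "i \<noteq> j" "x \<in> Ivl y i j" "x \<in> C"
  shows "Ivl y i j \<subseteq> C"
proof (rule components_maximal[OF C])
  show "connected (Ivl y i j)" by (simp add: Ivl_def)
  show "Ivl y i j \<subseteq> U" by (rule Ivl_sub[OF assms(1,2)])
  show "C \<inter> Ivl y i j \<noteq> {}" using assms(3,4) by blast
qed

lemma C_has_y: "\<exists>i<n. y i \<in> C"
proof -
  obtain x where x: "x \<in> C" using C_ne by blast
  then have "x \<in> U" using C_sub by blast
  then obtain i j where ij: "{i,j} \<in> G" "i \<noteq> j" "x \<in> Ivl y i j" using eu_iff by blast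
  have "Ivl y i j \<subseteq> C" by (rule C_Ivl[OF ij x])
  then have "y i \<in> C" using Ivl_ends by blast
  moreover have "i < n" using edge_props[OF G ij(1)] by simp
  ultimately show ?thesis by blast
qed

lemma C_len: "Sup C - Inf C \<le> 2 * sqrt (Wc c)" "0 \<le> Sup C - Inf C"
proof -
  have "\<bar>Sup C - c\<bar> \<le> sqrt (Wc c)" "\<bar>Inf C - c\<bar> \<le> sqrt (Wc c)"
    using C_bdd C_Sup C_Inf by blast+
  then show "Sup C - Inf C \<le> 2 * sqrt (Wc c)" by (auto simp: abs_le_iff)
  show "0 \<le> Sup C - Inf C" using C_le_Sup[OF C_Inf] by simp
qed

lemma C_thr_cl: "cl G (thr n y (Sup C))"
  unfolding cl_def
proof
  fix e assume e: "e \<in> G"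
  then obtain i j where ij: "i < n" "j < n" "i \<noteq> j" "e = {i, j}" using regD_edge[OF G] by blast
  let ?a = "Sup C"
  have mixed: False if hij: "{i',j'} \<in> G" "i' \<noteq> j'" and h: "y i' \<le> ?a" "\<not> y j' \<le> ?a" for i' j'
  proof -
    have "?a \<in> Ivl y i' j'" using h unfolding Ivl_def by auto
    then have "Ivl y i' j' \<subseteq> C" by (rule C_Ivl[OF hij _ C_Sup])
    then have "y j' \<in> C" using Ivl_ends by blast
    then show False using C_le_Sup h(2) by blast
  qed
  have eG: "{i,j} \<in> G" "{j,i} \<in> G" using e ij(4) by (auto simp: insert_commute)
  show "e \<subseteq> thr n y ?a \<or> e \<inter> thr n y ?a = {}"
  proof (cases "y i \<le> ?a")
    case True
    then have "y j \<le> ?a" using mixed[OF eG(1) ij(3)] by blast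
    then show ?thesis using True ij unfolding thr_def by auto
  next
    case False
    then have "\<not> y j \<le> ?a" using mixed[OF eG(2)] ij(3) by blast
    then show ?thesis using False ij unfolding thr_def by auto
  qed
qed

lemma C_thr_ne: "thr n y (Sup C) \<noteq> {}"
  using C_has_y C_le_Sup unfolding thr_def by blast

end

lemma thr_inj: "inj_on (\<lambda>C. thr n y (Sup C)) (components U)"
proof (rule inj_onI)
  fix C1 C2 assume C1: "C1 \<in> components U" and C2: "C2 \<in> components U"
    and eq: "thr n y (Sup C1) = thr n y (Sup C2)"
  show "C1 = C2"
  proof (rule ccontr)
    assume ne: "C1 \<noteq> C2"
    then have disj: "C1 \<inter> C2 = {}" using components_eq[OF C1 C2] by blast
    have gen: False if Ca: "Ca \<in> components U" and Cb: "Cb \<in> components U" and dj: "Ca \<inter> Cb = {}"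
      and lt: "Sup Ca < Sup Cb" and teq: "thr n y (Sup Ca) = thr n y (Sup Cb)" for Ca Cb
    proof -
      have above: "x > Sup Ca" if x: "x \<in> Cb" for x
      proof (rule ccontr)
        assume "\<not> x > Sup Ca"
        then have "x \<le> Sup Ca" by simp
        moreover have "Sup Cb \<in> Cb" by (rule C_Sup[OF Cb])
        moreover have ci: "\<forall>u\<in>Cb. \<forall>v\<in>Cb. \<forall>z. u \<le> z \<longrightarrow> z \<le> v \<longrightarrow> z \<in> Cb"
          using C_conn[OF Cb] unfolding connected_iff_interval .
        ultimately have "Sup Ca \<in> Cb"
          using x lt by (meson less_imp_le)
        then show False using C_Sup[OF Ca] dj by blast
      qed
      obtain j where j: "j < n" "y j \<in> Cb" using C_has_y[OF Cb] by blast
      have "j \<in> thr n y (Sup Cb)" using j C_le_Sup[OF Cb] unfolding thr_def by blast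
      moreover have "j \<notin> thr n y (Sup Ca)" using above[OF j(2)] unfolding thr_def by auto
      ultimately show False using teq by blast
    qed
    show False
    proof (cases "Sup C1 = Sup C2")
      case True
      then show False using C_Sup[OF C1] C_Sup[OF C2] disj by auto
    next
      case False
      then show False
      proof (cases "Sup C1 < Sup C2")
        case True show False by (rule gen[OF C1 C2 disj True eq])
      next
        case False
        then have "Sup C2 < Sup C1" using \<open>Sup C1 \<noteq> Sup C2\<close> by simp
        moreover have "C2 \<inter> C1 = {}" using disj by (simp add: Int_commute)
        ultimately show False using gen[OF C2 C1 _ _ eq[symmetric]] by blast
      qed
    qed
  qed
qed

definition "ThrP = {S. \<exists>a. S = thr n y a \<and> S \<noteq> {} \<and> S \<noteq> {..<n}}"

lemma card_components:
  assumes fin: "finite (components U)"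
  shows "card (components U) \<le> 1 + card {S\<in>ThrP. cl G S}"
proof -
  have "(\<lambda>C. thr n y (Sup C)) ` components U \<subseteq> insert {..<n} {S\<in>ThrP. cl G S}"
  proof (rule image_subsetI)
    fix C assume C: "C \<in> components U"
    have 1: "cl G (thr n y (Sup C))" by (rule C_thr_cl[OF C])
    have 2: "thr n y (Sup C) \<noteq> {}" by (rule C_thr_ne[OF C])
    show "thr n y (Sup C) \<in> insert {..<n} {S\<in>ThrP. cl G S}"
    proof (cases "thr n y (Sup C) = {..<n}")
      case False
      then have "thr n y (Sup C) \<in> ThrP" unfolding ThrP_def using 2 by blast
      then show ?thesis using 1 by blast
    qed simp
  qed
  moreover have "finite (insert {..<n} {S\<in>ThrP. cl G S})"
  proof -
    have "{S\<in>ThrP. cl G S} \<subseteq> Pow {..<n}" unfolding ThrP_def thr_def by auto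
    then show ?thesis by (simp add: finite_subset)
  qed
  ultimately have "card (components U) \<le> card (insert {..<n} {S\<in>ThrP. cl G S})"
    using card_inj_on_le[OF thr_inj] by blast
  also have "\<dots> \<le> 1 + card {S\<in>ThrP. cl G S}" by (simp add: card_insert_le_m1)
  finally show ?thesis .
qed

end

lemma len_pow:
  fixes L W s :: real
  assumes "0 \<le> L" "L \<le> 2 * sqrt W" "0 \<le> W" "0 < s" "s \<le> 1"
  shows "L powr s \<le> 2 * W powr (s / 2)"
proof -
  have "L powr s \<le> (2 * sqrt W) powr s" by (rule powr_mono2) (use assms in auto)
  also have "\<dots> = 2 powr s * sqrt W powr s" by (rule powr_mult)
  also have "sqrt W powr s = W powr (s / 2)"
    using assms(3) by (simp add: powr_half_sqrt[symmetric] powr_powr)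
  also have "2 powr s \<le> (2::real) powr 1" by (rule powr_mono) (use assms in auto)
  then have "2 powr s * W powr (s / 2) \<le> 2 * W powr (s / 2)"
    by (intro mult_right_mono) auto
  finally show ?thesis by simp
qed

context compl
begin

lemma block_bound:
  assumes s: "0 < s" "s \<le> 1"
  shows "block_sum s G y \<le> real (1 + card {S\<in>ThrP. cl G S}) * (2 * Wc c powr (s / 2))"
proof (cases "finite (components U)")
  case False
  then show ?thesis unfolding block_sum_def by simp
next
  case True
  have W0: "0 \<le> Wc c" unfolding Wc_def by (intro sum_nonneg) auto
  have "block_sum s G y \<le> (\<Sum>C\<in>components U. 2 * Wc c powr (s / 2))"
    unfolding block_sum_def
  proof (rule sum_mono)
    fix C assume C: "C \<in> components U"
    show "(Sup C - Inf C) powr s \<le> 2 * Wc c powr (s / 2)"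
      by (rule len_pow[OF C_len(2)[OF C] C_len(1)[OF C] W0 s])
  qed
  also have "\<dots> = real (card (components U)) * (2 * Wc c powr (s / 2))" by simp
  also have "\<dots> \<le> real (1 + card {S\<in>ThrP. cl G S}) * (2 * Wc c powr (s / 2))"
    by (intro mult_right_mono) (use card_components[OF True] in auto)
  finally show ?thesis .
qed

end

context compl
begin

lemma ThrP_sub: "S \<in> ThrP \<Longrightarrow> S \<subseteq> {..<n}"
  unfolding ThrP_def thr_def by auto

lemma ThrP_finite: "finite ThrP"
proof -
  have "ThrP \<subseteq> Pow {..<n}" using ThrP_sub by blast
  then show ?thesis by (rule finite_subset) simp
qed

lemma ThrP_card: "card ThrP \<le> n - 1"
proof -
  have "inj_on card ThrP"
  proof (rule inj_onI)
    fix S1 S2 assume S1: "S1 \<in> ThrP" and S2: "S2 \<in> ThrP" and c: "card S1 = card S2"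
    obtain a1 where a1: "S1 = thr n y a1" using S1 unfolding ThrP_def by blast
    obtain a2 where a2: "S2 = thr n y a2" using S2 unfolding ThrP_def by blast
    have fin: "finite S1" "finite S2" using ThrP_sub[OF S1] ThrP_sub[OF S2] finite_subset by blast+
    show "S1 = S2"
    proof (cases "a1 \<le> a2")
      case True
      then have "S1 \<subseteq> S2" unfolding a1 a2 thr_def by auto
      then show ?thesis using card_subset_eq[OF fin(2) \<open>S1 \<subseteq> S2\<close>] c by simp
    next
      case False
      then have "S2 \<subseteq> S1" unfolding a1 a2 thr_def by auto
      then show ?thesis using card_subset_eq[OF fin(1) \<open>S2 \<subseteq> S1\<close>] c by simp
    qed
  qed
  moreover have "card ` ThrP \<subseteq> {1..n-1}"
  proof (rule image_subsetI)
    fix S assume S: "S \<in> ThrP"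
    have sub: "S \<subseteq> {..<n}" by (rule ThrP_sub[OF S])
    have "S \<noteq> {}" "S \<noteq> {..<n}" using S unfolding ThrP_def by auto
    then have "card S \<ge> 1" "card S < n"
      using sub finite_subset[OF sub] by (auto simp: card_gt_0_iff Suc_le_eq intro: psubset_card_mono[of "{..<n}", simplified])
    then show "card S \<in> {1..n-1}" by auto
  qed
  ultimately have "card ThrP \<le> card {1..n-1}" using card_inj_on_le by blast
  then show ?thesis by simp
qed

end

lemma nat_prod_bound:
  fixes s n :: nat
  assumes "1 \<le> s" "s < n"
  shows "n - 1 \<le> s * (n - s)"
proof -
  obtain s' where s': "s = Suc s'" using assms(1) by (cases s) auto
  obtain t where t: "n - s = Suc t" using assms(2) by (cases "n - s") auto
  have "n - 1 = s' + Suc t" using s' t assms by simp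
  moreover have "s * (n - s) = Suc s' * Suc t" using s' t by simp
  moreover have "Suc s' * Suc t = Suc t + s' * Suc t" by simp
  moreover have "s' \<le> s' * Suc t" by simp
  ultimately show ?thesis by linarith
qed

lemma closed_count:
  assumes hS: "S \<subseteq> {..<n}" "S \<noteq> {}" "S \<noteq> {..<n}" and k: "2 \<le> k"
  shows "card {G\<in>regular_graphs n k. cl G S} * (n - 1) \<le> card (regular_graphs n k)"
proof -
  interpret swset n k S by unfold_locales (rule hS(1))
  have finS: "finite S" using hS(1) finite_subset by blast
  have cT: "card T = n - card S" unfolding T_def using card_Diff_subset[OF finS hS(1)] by simp
  have s1: "1 \<le> card S" using hS(2) finS by (simp add: Suc_le_eq card_gt_0_iff)
  have s2: "card S < n" using hS(1,3) psubset_card_mono[of "{..<n}" S] by auto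
  have pb: "n - 1 \<le> card S * (n - card S)" by (rule nat_prod_bound[OF s1 s2])
  let ?C = "card {G\<in>regular_graphs n k. cl G S}"
  have "?C * (n - 1) * 2 \<le> ?C * (card S * (n - card S)) * (k * k)"
  proof (rule mult_mono)
    show "?C * (n - 1) \<le> ?C * (card S * (n - card S))" using pb by simp
    show "2 \<le> k * k" using k by (metis le_trans mult_le_mono one_le_numeral mult_2 numeral_le_one_iff le_square)
  qed auto
  also have "\<dots> = ?C * (card S * k) * (card T * k)" unfolding cT by (simp add: algebra_simps)
  also have "\<dots> \<le> 2 * card (regular_graphs n k)" by (rule switch_count)
  finally show ?thesis by simp
qed

lemma card_filter_sum: "finite A \<Longrightarrow> card {x\<in>A. P x} = (\<Sum>x\<in>A. if P x then 1 else (0::nat))"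
  by (simp add: sum.If_cases Int_def conj_commute)

lemma sum_cl_bound:
  assumes cG: "compl G0 n k" and k: "2 \<le> k" and n: "2 \<le> n"
  shows "(\<Sum>G\<in>regular_graphs n k. card {S\<in>compl.ThrP n y. cl G S}) \<le> card (regular_graphs n k)"
proof -
  let ?R = "regular_graphs n k" and ?Th = "compl.ThrP n y"
  have finTh: "finite ?Th" by (rule compl.ThrP_finite[OF cG])
  have "(\<Sum>G\<in>?R. card {S\<in>?Th. cl G S}) = (\<Sum>G\<in>?R. \<Sum>S\<in>?Th. if cl G S then 1 else 0)"
    using finTh by (simp add: card_filter_sum)
  also have "\<dots> = (\<Sum>S\<in>?Th. \<Sum>G\<in>?R. if cl G S then 1 else 0)" by (rule sum.swap)
  also have "\<dots> = (\<Sum>S\<in>?Th. card {G\<in>?R. cl G S})"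
    using finite_regular_graphs by (simp add: card_filter_sum)
  finally have eq: "(\<Sum>G\<in>?R. card {S\<in>?Th. cl G S}) = (\<Sum>S\<in>?Th. card {G\<in>?R. cl G S})" .
  have "(\<Sum>S\<in>?Th. card {G\<in>?R. cl G S}) * (n - 1) = (\<Sum>S\<in>?Th. card {G\<in>?R. cl G S} * (n - 1))"
    by (simp add: sum_distrib_right)
  also have "\<dots> \<le> (\<Sum>S\<in>?Th. card ?R)"
  proof (rule sum_mono)
    fix S assume S: "S \<in> ?Th"
    have "S \<subseteq> {..<n}" "S \<noteq> {}" "S \<noteq> {..<n}"
      using S compl.ThrP_sub[OF cG] unfolding compl.ThrP_def[OF cG] by auto
    then show "card {G\<in>?R. cl G S} * (n - 1) \<le> card ?R" by (rule closed_count[OF _ _ _ k])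
  qed
  also have "\<dots> = card ?Th * card ?R" by simp
  also have "\<dots> \<le> (n - 1) * card ?R" using compl.ThrP_card[OF cG] by (simp add: mult_right_mono)
  finally have "(\<Sum>S\<in>?Th. card {G\<in>?R. cl G S}) * (n - 1) \<le> card ?R * (n - 1)" by (simp add: mult.commute)
  then have "(\<Sum>S\<in>?Th. card {G\<in>?R. cl G S}) \<le> card ?R" using n by simp
  then show ?thesis unfolding eq .
qed

lemma exp_block:
  assumes k: "2 \<le> k" and n: "2 \<le> n" and Rne: "regular_graphs n k \<noteq> {}" and s: "0 < s" "s \<le> 1"
  shows "(\<Sum>G\<in>regular_graphs n k. block_sum s G y)
     \<le> 4 * real (card (regular_graphs n k)) * (\<Sum>i<n. (y i - c)^2) powr (s / 2)"
proof -
  let ?R = "regular_graphs n k" and ?Th = "compl.ThrP n y"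
  obtain G0 where G0: "G0 \<in> ?R" using Rne by blast
  have cG: "compl G0 n k" by unfold_locales (rule G0)
  define B where "B = 2 * (\<Sum>i<n. (y i - c)^2) powr (s / 2)"
  have B0: "0 \<le> B" unfolding B_def by simp
  have "(\<Sum>G\<in>?R. block_sum s G y) \<le> (\<Sum>G\<in>?R. real (1 + card {S\<in>?Th. cl G S}) * B)"
  proof (rule sum_mono)
    fix G assume G: "G \<in> ?R"
    interpret compl G n k y by unfold_locales (rule G)
    show "block_sum s G y \<le> real (1 + card {S\<in>?Th. cl G S}) * B"
      using block_bound[OF s, of c] unfolding B_def Wc_def .
  qed
  also have "\<dots> = real (card ?R + (\<Sum>G\<in>?R. card {S\<in>?Th. cl G S})) * B"
    by (simp add: sum_distrib_right[symmetric] sum.distrib)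
  also have "\<dots> \<le> real (2 * card ?R) * B"
  proof (rule mult_right_mono[OF _ B0])
    show "real (card ?R + (\<Sum>G\<in>?R. card {S\<in>?Th. cl G S})) \<le> real (2 * card ?R)"
      unfolding of_nat_le_iff using sum_cl_bound[OF cG k n, of y] by simp
  qed
  finally show ?thesis unfolding B_def by simp
qed

lemma young_point:
  fixes u r :: real
  assumes "0 \<le> u" "0 < r" "r \<le> 1"
  shows "u powr r \<le> r * u + (1 - r)"
proof (cases "u = 0")
  case True then show ?thesis using assms by simp
next
  case False
  then have "u > 0" using assms by simp
  have "u powr r * 1 powr (1 - r) \<le> r * u + (1 - r) * 1"
    by (rule Youngs_inequality_0) (use assms \<open>u > 0\<close> in auto)
  then show ?thesis by simp
qed

lemma jensen_powr:
  fixes f :: "'a \<Rightarrow> real"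
  assumes fin: "finite A" and ne: "A \<noteq> {}" and f0: "\<And>a. a \<in> A \<Longrightarrow> 0 \<le> f a"
    and r: "0 < r" "r \<le> 1"
  shows "(\<Sum>a\<in>A. f a powr r) \<le> real (card A) * ((\<Sum>a\<in>A. f a) / real (card A)) powr r"
proof -
  define m where "m = (\<Sum>a\<in>A. f a) / real (card A)"
  have cA: "real (card A) > 0" using fin ne by (simp add: card_gt_0_iff)
  have m0: "m \<ge> 0" unfolding m_def using f0 by (intro divide_nonneg_pos sum_nonneg cA) auto
  show ?thesis
  proof (cases "m = 0")
    case True
    then have "(\<Sum>a\<in>A. f a) = 0" unfolding m_def using cA by simp
    then have "\<forall>a\<in>A. f a = 0" using sum_nonneg_eq_0_iff[OF fin] f0 by blast
    then show ?thesis by (simp add: m_def[symmetric] True)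
  next
    case False
    then have mp: "m > 0" using m0 by simp
    have mr: "m powr r > 0" using mp by simp
    have pt: "f a powr r = (f a / m) powr r * m powr r" if "a \<in> A" for a
    proof -
      have "(f a / m) powr r = f a powr r / m powr r"
        by (rule powr_divide)
      then show ?thesis using mr by simp
    qed
    have "(\<Sum>a\<in>A. f a powr r) = (\<Sum>a\<in>A. (f a / m) powr r) * m powr r"
      unfolding sum_distrib_right using pt by (rule sum.cong[OF refl])
    also have "(\<Sum>a\<in>A. (f a / m) powr r) \<le> (\<Sum>a\<in>A. r * (f a / m) + (1 - r))"
      by (rule sum_mono, rule young_point) (use f0 mp r in auto)
    also have "(\<Sum>a\<in>A. r * (f a / m) + (1 - r)) = r * ((\<Sum>a\<in>A. f a) / m) + (1 - r) * real (card A)"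
      by (simp add: sum.distrib sum_distrib_left sum_divide_distrib)
    also have "(\<Sum>a\<in>A. f a) / m = real (card A)" unfolding m_def using cA mp m_def by auto
    finally have "(\<Sum>a\<in>A. f a powr r) \<le> (r * real (card A) + (1 - r) * real (card A)) * m powr r"
      by (simp add: mult_right_mono)
    then show ?thesis by (simp add: m_def algebra_simps)
  qed
qed

lemma alpha_bound:
  fixes rho r :: real
  assumes "0 < rho" "rho < 1" "0 < r" "r \<le> 1"
  shows "rho powr r \<le> 1 - r * (1 - rho)"
  using young_point[of rho r] assms by (simp add: algebra_simps)

lemma traj_cons: "traj d n x (G ## \<omega>) (Suc t) = traj d n (avg_step d n G x) \<omega> t"
proof (induction t)
  case 0 then show ?case by simp
next
  case (Suc t)
  have "traj d n x (G ## \<omega>) (Suc (Suc t)) = avg_step d n ((G ## \<omega>) !! Suc t) (traj d n x (G ## \<omega>) (Suc t))"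
    by simp
  also have "\<dots> = avg_step d n (\<omega> !! t) (traj d n (avg_step d n G x) \<omega> t)" using Suc by simp
  finally show ?case by simp
qed

locale rsys =
  fixes d n :: nat and s :: real
  assumes d: "d > 3" and n: "n > d" and Rne: "regular_graphs n (d - 1) \<noteq> {}"
    and s: "0 < s" "s \<le> 1"
begin

abbreviation "R \<equiv> regular_graphs n (d - 1)"
abbreviation "M \<equiv> measure_pmf (pmf_of_set R)"

definition prj :: "nat set set \<Rightarrow> nat set set" where
  "prj G = (if G \<in> R then G else (SOME G. G \<in> R))"

lemma prj_R: "prj G \<in> R"
  unfolding prj_def using Rne by (auto intro: someI_ex)

lemma prj_id: "G \<in> R \<Longrightarrow> prj G = G" unfolding prj_def by simp

definition Tt :: "nat \<Rightarrow> (nat \<Rightarrow> real) \<Rightarrow> nat set set stream \<Rightarrow> ennreal" where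
  "Tt t x \<omega> = ennreal (block_sum s (prj (\<omega> !! t)) (traj d n x (smap prj \<omega>) t))"

lemma Tt_0: "Tt 0 x \<omega> = ennreal (block_sum s (prj (shd \<omega>)) x)"
  unfolding Tt_def by simp

lemma Tt_Suc: "Tt (Suc t) x (G ## \<omega>) = Tt t (avg_step d n (prj G) x) \<omega>"
  unfolding Tt_def by (simp del: traj.simps add: traj_cons)

lemma meas_shd_fun: "(\<lambda>\<omega>. g (shd \<omega>)) \<in> borel_measurable (stream_space M)"
  by (rule measurable_compose[OF measurable_shd]) simp

lemma Tt_meas: "Tt t x \<in> borel_measurable (stream_space M)"
proof (induction t arbitrary: x)
  case 0
  show ?case unfolding Tt_0 by (rule meas_shd_fun)
next
  case (Suc t)
  have eq: "Tt (Suc t) x = (\<lambda>\<omega>. \<Sum>G\<in>R. if prj (shd \<omega>) = G then Tt t (avg_step d n G x) (stl \<omega>) else 0)"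
  proof
    fix \<omega>
    have "Tt (Suc t) x \<omega> = Tt (Suc t) x (shd \<omega> ## stl \<omega>)" by simp
    also have "\<dots> = Tt t (avg_step d n (prj (shd \<omega>)) x) (stl \<omega>)" by (rule Tt_Suc)
    also have "\<dots> = (\<Sum>G\<in>R. if prj (shd \<omega>) = G then Tt t (avg_step d n G x) (stl \<omega>) else 0)"
      using prj_R[of "shd \<omega>"] finite_regular_graphs by (simp add: sum.delta)
    finally show "Tt (Suc t) x \<omega> = (\<Sum>G\<in>R. if prj (shd \<omega>) = G then Tt t (avg_step d n G x) (stl \<omega>) else 0)" .
  qed
  show ?case unfolding eq
  proof (rule borel_measurable_sum)
    fix G assume "G \<in> R"
    show "(\<lambda>\<omega>. if prj (shd \<omega>) = G then Tt t (avg_step d n G x) (stl \<omega>) else 0) \<in> borel_measurable (stream_space M)"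
    proof (rule measurable_If)
      show "(\<lambda>\<omega>. Tt t (avg_step d n G x) (stl \<omega>)) \<in> borel_measurable (stream_space M)"
        by (rule measurable_compose[OF measurable_stl Suc.IH])
      show "(\<lambda>\<omega>. 0) \<in> borel_measurable (stream_space M)" by simp
      have "{\<omega> \<in> space (stream_space M). prj (shd \<omega>) = G} = shd -` {G'. prj G' = G} \<inter> space (stream_space M)"
        by blast
      also have "\<dots> \<in> sets (stream_space M)" by (rule measurable_sets[OF measurable_shd]) simp
      finally show "{\<omega> \<in> space (stream_space M). prj (shd \<omega>) = G} \<in> sets (stream_space M)" .
    qed
  qed
qed

lemma intM: "(\<integral>\<^sup>+G. h G \<partial>M) = (\<Sum>G\<in>R. h G) / of_nat (card R)"
  by (rule nn_integral_pmf_of_set[OF Rne finite_regular_graphs])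

lemma int_step: "(\<integral>\<^sup>+\<omega>. Tt (Suc t) x \<omega> \<partial>stream_space M)
    = (\<integral>\<^sup>+G. (\<integral>\<^sup>+\<omega>. Tt t (avg_step d n (prj G) x) \<omega> \<partial>stream_space M) \<partial>M)"
  by (subst prob_space.nn_integral_stream_space[OF prob_space_measure_pmf Tt_meas]) (simp add: Tt_Suc)

lemma int_0: "(\<integral>\<^sup>+\<omega>. Tt 0 x \<omega> \<partial>stream_space M) = (\<integral>\<^sup>+G. ennreal (block_sum s (prj G) x) \<partial>M)"
proof -
  interpret S: prob_space "stream_space M"
    by (rule prob_space.prob_space_stream_space[OF prob_space_measure_pmf])
  show ?thesis
    by (subst prob_space.nn_integral_stream_space[OF prob_space_measure_pmf Tt_meas]) (simp add: Tt_0 S.emeasure_space_1[simplified])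
qed

end

lemma block_sum_nonneg: "0 \<le> block_sum s G y"
  unfolding block_sum_def by (intro sum_nonneg) simp

context rsys
begin

definition "rho = 1 - 2 * (real d - 1) / (real d)^2"
definition "r = s / 2"
definition Wx :: "real \<Rightarrow> (nat \<Rightarrow> real) \<Rightarrow> real" where "Wx c x = (\<Sum>i<n. (x i - c)^2)"

lemma rho_bounds: "0 < rho" "rho < 1"
proof -
  have d1: "real d > 3" using d by simp
  have "(real d)^2 - 2 * (real d - 1) = (real d - 1)^2 + 1" by (simp add: power2_eq_square algebra_simps)
  moreover have "(real d - 1)^2 \<ge> 0" by simp
  ultimately have "2 * (real d - 1) < (real d)^2" by linarith
  then have "2 * (real d - 1) / (real d)^2 < 1" using d1 by (simp add: divide_less_eq)
  then show "0 < rho" unfolding rho_def by simp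
  have "0 < 2 * (real d - 1) / (real d)^2" using d1 by (intro divide_pos_pos) auto
  then show "rho < 1" unfolding rho_def by simp
qed

lemma r_bounds: "0 < r" "r \<le> 1" using s unfolding r_def by auto

lemma Wx_nonneg: "0 \<le> Wx c x" unfolding Wx_def by (intro sum_nonneg) auto

lemma cardR_pos: "real (card R) > 0" using Rne finite_regular_graphs by (simp add: card_gt_0_iff)

lemma k_ge: "2 \<le> d - 1" using d by simp
lemma n_ge: "2 \<le> n" using d n by simp

lemma sum_div_ennreal:
  assumes "\<And>G. G \<in> R \<Longrightarrow> 0 \<le> f G"
  shows "(\<Sum>G\<in>R. ennreal (f G)) / of_nat (card R) = ennreal ((\<Sum>G\<in>R. f G) / real (card R))"
proof -
  have "(\<Sum>G\<in>R. ennreal (f G)) = ennreal (\<Sum>G\<in>R. f G)" using assms by (simp add: sum_ennreal)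
  moreover have "(of_nat (card R) :: ennreal) = ennreal (real (card R))" by (simp add: ennreal_of_nat_eq_real_of_nat)
  ultimately show ?thesis using cardR_pos assms by (simp add: divide_ennreal sum_nonneg)
qed

lemma E_bound:
  "c = (\<Sum>i<n. x i) / real n \<Longrightarrow>
   (\<integral>\<^sup>+\<omega>. Tt t x \<omega> \<partial>stream_space M) \<le> ennreal (4 * (rho powr r)^t * Wx c x powr r)"
proof (induction t arbitrary: x)
  case 0
  have "(\<integral>\<^sup>+\<omega>. Tt 0 x \<omega> \<partial>stream_space M) = (\<Sum>G\<in>R. ennreal (block_sum s (prj G) x)) / of_nat (card R)"
    by (subst int_0) (rule intM)
  also have "\<dots> = (\<Sum>G\<in>R. ennreal (block_sum s G x)) / of_nat (card R)"
    by (simp add: prj_id)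
  also have "\<dots> = ennreal ((\<Sum>G\<in>R. block_sum s G x) / real (card R))"
    by (rule sum_div_ennreal) (rule block_sum_nonneg)
  also have "\<dots> \<le> ennreal (4 * (rho powr r)^0 * Wx c x powr r)"
  proof (rule ennreal_leI)
    have "(\<Sum>G\<in>R. block_sum s G x) \<le> 4 * real (card R) * Wx c x powr r"
      using exp_block[OF k_ge n_ge Rne s, of x c] unfolding Wx_def r_def .
    then show "(\<Sum>G\<in>R. block_sum s G x) / real (card R) \<le> 4 * (rho powr r)^0 * Wx c x powr r"
      using cardR_pos by (simp add: divide_le_eq mult.commute mult.left_commute)
  qed
  finally show ?case .
next
  case (Suc t)
  let ?a = "rho powr r"
  have mean: "c = (\<Sum>i<n. avg_step d n G x i) / real n" if "G \<in> R" for G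
    using Suc.prems mean_preserved[OF that] d by simp
  have "(\<integral>\<^sup>+\<omega>. Tt (Suc t) x \<omega> \<partial>stream_space M)
      = (\<Sum>G\<in>R. (\<integral>\<^sup>+\<omega>. Tt t (avg_step d n (prj G) x) \<omega> \<partial>stream_space M)) / of_nat (card R)"
    by (subst int_step) (rule intM)
  also have "\<dots> = (\<Sum>G\<in>R. (\<integral>\<^sup>+\<omega>. Tt t (avg_step d n G x) \<omega> \<partial>stream_space M)) / of_nat (card R)"
    by (simp add: prj_id)
  also have "\<dots> \<le> (\<Sum>G\<in>R. ennreal (4 * ?a^t * Wx c (avg_step d n G x) powr r)) / of_nat (card R)"
    by (intro divide_right_mono_ennreal sum_mono Suc.IH mean)
  also have "\<dots> = ennreal ((\<Sum>G\<in>R. 4 * ?a^t * Wx c (avg_step d n G x) powr r) / real (card R))"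
    by (rule sum_div_ennreal) simp
  also have "\<dots> \<le> ennreal (4 * ?a^(Suc t) * Wx c x powr r)"
  proof (rule ennreal_leI)
    have J: "(\<Sum>G\<in>R. Wx c (avg_step d n G x) powr r)
        \<le> real (card R) * ((\<Sum>G\<in>R. Wx c (avg_step d n G x)) / real (card R)) powr r"
      by (rule jensen_powr[OF finite_regular_graphs Rne Wx_nonneg r_bounds])
    have D: "(\<Sum>G\<in>R. Wx c (avg_step d n G x)) \<le> rho * real (card R) * Wx c x"
      using exp_decay[of d n c x] d n Suc.prems unfolding Wx_def rho_def by simp
    have D2: "((\<Sum>G\<in>R. Wx c (avg_step d n G x)) / real (card R)) powr r \<le> (rho * Wx c x) powr r"
    proof (rule powr_mono2)
      show "0 \<le> r" using r_bounds by simp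
      show "0 \<le> (\<Sum>G\<in>R. Wx c (avg_step d n G x)) / real (card R)"
        by (intro divide_nonneg_pos sum_nonneg Wx_nonneg cardR_pos)
      show "(\<Sum>G\<in>R. Wx c (avg_step d n G x)) / real (card R) \<le> rho * Wx c x"
        using D cardR_pos by (simp add: divide_le_eq mult.commute mult.left_commute)
    qed
    have P: "(rho * Wx c x) powr r = ?a * Wx c x powr r"
      by (rule powr_mult)
    have "(\<Sum>G\<in>R. 4 * ?a^t * Wx c (avg_step d n G x) powr r) / real (card R)
        = 4 * ?a^t * ((\<Sum>G\<in>R. Wx c (avg_step d n G x) powr r) / real (card R))"
      by (simp add: sum_distrib_left)
    also have "\<dots> \<le> 4 * ?a^t * (((\<Sum>G\<in>R. Wx c (avg_step d n G x)) / real (card R)) powr r)"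
      using J cardR_pos by (intro mult_left_mono) (auto simp: divide_le_eq mult.commute)
    also have "\<dots> \<le> 4 * ?a^t * (?a * Wx c x powr r)"
      using D2 P by (intro mult_left_mono) auto
    finally show "(\<Sum>G\<in>R. 4 * ?a^t * Wx c (avg_step d n G x) powr r) / real (card R) \<le> 4 * ?a^(Suc t) * Wx c x powr r"
      by (simp add: mult.assoc mult.left_commute)
  qed
  finally show ?case .
qed

end

context rsys
begin

lemma AE_R: "AE \<omega> in stream_space M. \<forall>t. \<omega> !! t \<in> R"
proof -
  have "AE \<omega> in stream_space M. stream_all (\<lambda>G. G \<in> R) \<omega>"
  proof (rule prob_space.AE_stream_all[OF prob_space_measure_pmf])
    show "Measurable.pred M (\<lambda>G. G \<in> R)" by simp
    show "AE G in M. G \<in> R"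
      unfolding AE_measure_pmf_iff set_pmf_of_set[OF Rne finite_regular_graphs] by (rule ballI)
  qed
  then show ?thesis unfolding stream_all_def .
qed

lemma energy_eq:
  assumes "\<forall>t. \<omega> !! t \<in> R"
  shows "s_energy d n s x0 \<omega> = (\<Sum>t. Tt t x0 \<omega>)"
proof -
  have sm: "smap prj \<omega> = \<omega>" unfolding smap_alt using assms prj_id by simp
  show ?thesis unfolding s_energy_def Tt_def sm using assms prj_id by simp
qed

lemma energy_bound:
  assumes c: "c = (\<Sum>i<n. x0 i) / real n"
  shows "(\<integral>\<^sup>+\<omega>. s_energy d n s x0 \<omega> \<partial>stream_space M) \<le> ennreal (4 * Wx c x0 powr r / (1 - rho powr r))"
proof -
  let ?a = "rho powr r"
  have a0: "0 \<le> ?a" by simp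
  have a1: "?a < 1"
  proof -
    have "?a \<le> 1 - r * (1 - rho)" by (rule alpha_bound[OF rho_bounds r_bounds])
    moreover have "r * (1 - rho) > 0" using r_bounds rho_bounds by simp
    ultimately show ?thesis by linarith
  qed
  have "(\<integral>\<^sup>+\<omega>. s_energy d n s x0 \<omega> \<partial>stream_space M) = (\<integral>\<^sup>+\<omega>. (\<Sum>t. Tt t x0 \<omega>) \<partial>stream_space M)"
    by (rule nn_integral_cong_AE) (use AE_R in \<open>auto elim!: eventually_mono simp: energy_eq\<close>)
  also have "\<dots> = (\<Sum>t. \<integral>\<^sup>+\<omega>. Tt t x0 \<omega> \<partial>stream_space M)"
    by (rule nn_integral_suminf) (rule Tt_meas)
  also have "\<dots> \<le> (\<Sum>t. ennreal (4 * ?a^t * Wx c x0 powr r))"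
    by (intro suminf_le summableI E_bound[OF c])
  also have "\<dots> = ennreal (4 * Wx c x0 powr r / (1 - ?a))"
  proof (rule suminf_ennreal_eq)
    show "\<And>t. 0 \<le> 4 * ?a^t * Wx c x0 powr r" by simp
    have "(\<lambda>t. (4 * Wx c x0 powr r) * ?a^t) sums ((4 * Wx c x0 powr r) * (1 / (1 - ?a)))"
      by (rule sums_mult[OF geometric_sums]) (use a0 a1 in simp)
    then show "(\<lambda>t. 4 * ?a^t * Wx c x0 powr r) sums (4 * Wx c x0 powr r / (1 - ?a))"
      by (simp add: mult.commute mult.left_commute)
  qed
  finally show ?thesis .
qed

lemma final_bound:
  assumes c: "c = (\<Sum>i<n. x0 i) / real n" and W1: "Wx c x0 \<le> 1"
  shows "4 * Wx c x0 powr r / (1 - rho powr r) \<le> (4 * (real d)^2 / (real d - 1)) / s"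
proof -
  let ?a = "rho powr r"
  have d1: "real d > 3" using d by simp
  have W: "Wx c x0 powr r \<le> 1" by (rule powr_le1) (use r_bounds W1 Wx_nonneg[of c x0] in auto)
  have "?a \<le> 1 - r * (1 - rho)" by (rule alpha_bound[OF rho_bounds r_bounds])
  moreover have "r * (1 - rho) = s * (real d - 1) / (real d)^2"
  proof -
    have "1 - rho = 2 * (real d - 1) / (real d)^2" by (simp add: rho_def)
    moreover have "s / 2 * (2 * (real d - 1) / (real d)^2) = s * (real d - 1) / (real d)^2" using d by (simp add: field_simps)
    ultimately show ?thesis unfolding r_def by metis
  qed
  ultimately have ge: "1 - ?a \<ge> s * (real d - 1) / (real d)^2" by linarith
  have pos: "s * (real d - 1) / (real d)^2 > 0" using s d1 by (intro divide_pos_pos mult_pos_pos) auto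
  have "4 * Wx c x0 powr r / (1 - ?a) \<le> 4 / (1 - ?a)"
    using W pos ge by (intro divide_right_mono) auto
  also have "\<dots> \<le> 4 / (s * (real d - 1) / (real d)^2)"
  proof -
    have "0 < (1 - ?a) * (s * (real d - 1) / (real d)^2)" using pos ge by (intro mult_pos_pos) auto
    then show ?thesis by (rule divide_left_mono[OF ge, rotated]) simp
  qed
  also have "\<dots> = (4 * (real d)^2 / (real d - 1)) / s"
    using s d1 by (simp add: field_simps)
  finally show ?thesis .
qed

end

theorem theorem1:
  fixes d :: nat
  assumes "d > 3"
  shows "\<exists>c>0. \<forall>n s (x0 :: nat \<Rightarrow> real).
           n > d \<longrightarrow> regular_graphs n (d - 1) \<noteq> {} \<longrightarrow> 0 < s \<longrightarrow> s \<le> 1 \<longrightarrow>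
           (\<Sum>i<n. real d * (x0 i - (\<Sum>j<n. x0 j) / real n)^2) \<le> 1 \<longrightarrow>
           (\<integral>\<^sup>+ \<omega>. s_energy d n s x0 \<omega> \<partial>graph_seq_measure d n) \<le> ennreal (c / s)"
proof (intro exI[of _ "4 * (real d)^2 / (real d - 1)"] conjI allI impI)
  show "0 < 4 * (real d)^2 / (real d - 1)" using assms by (intro divide_pos_pos) auto
  fix n :: nat and s :: real and x0 :: "nat \<Rightarrow> real"
  assume n: "n > d" and Rne: "regular_graphs n (d - 1) \<noteq> {}" and s: "0 < s" "s \<le> 1"
    and h: "(\<Sum>i<n. real d * (x0 i - (\<Sum>j<n. x0 j) / real n)^2) \<le> 1"
  interpret rsys d n s by unfold_locales (use assms n Rne s in auto)
  define c where "c = (\<Sum>j<n. x0 j) / real n"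
  have W1: "Wx c x0 \<le> 1"
  proof -
    have "real d * Wx c x0 \<le> 1" using h unfolding Wx_def c_def by (simp add: sum_distrib_left)
    moreover have "Wx c x0 \<le> real d * Wx c x0" using Wx_nonneg[of c x0] assms
      by (intro mult_le_cancel_right1[THEN iffD2]) auto
    ultimately show ?thesis by linarith
  qed
  have "(\<integral>\<^sup>+ \<omega>. s_energy d n s x0 \<omega> \<partial>graph_seq_measure d n) = (\<integral>\<^sup>+ \<omega>. s_energy d n s x0 \<omega> \<partial>stream_space M)"
    unfolding graph_seq_measure_def ..
  also have "\<dots> \<le> ennreal (4 * Wx c x0 powr r / (1 - rho powr r))"
    by (rule energy_bound[OF c_def])
  also have "\<dots> \<le> ennreal ((4 * (real d)^2 / (real d - 1)) / s)"
    by (rule ennreal_leI, rule final_bound[OF c_def W1])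
  finally show "(\<integral>\<^sup>+ \<omega>. s_energy d n s x0 \<omega> \<partial>graph_seq_measure d n) \<le> ennreal ((4 * (real d)^2 / (real d - 1)) / s)" .
qed

end
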